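(* Let $N$ be a finite $\Lambda$-module with $|N/(1-t)N|=l$. Then there exists a finite $\Lambda$-module $M$ containing $N$ as a $\Lambda$-submodule such that $|M/N|=l$ and $(1-t)M=N$.
   Context: $\Lambda=\mathbb Z[t,t^{-1}]$, the ring of Laurent polynomials over $\mathbb Z$. A $\Lambda$-module is an abelian group with an automorphism by which $t$ acts. *)

theory Defs
  imports "HOL-Algebra.Algebra"
begin

text \<open>A module over Lambda = Z[t,t^-1] is an abelian group (written multiplicatively,
as in HOL-Algebra) together with a group automorphism T (the action of t).\<close>

definition lam_module :: "('a, 'b) monoid_scheme \<Rightarrow> ('a \<Rightarrow> 'a) \<Rightarrow> bool" where
  "lam_module G T \<longleftrightarrow> comm_group G \<and> T \<in> hom G G \<and> bij_betw T (carrier G) (carrier G)"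

definition lam_hom :: "('a, 'b) monoid_scheme \<Rightarrow> ('a \<Rightarrow> 'a) \<Rightarrow> ('c, 'd) monoid_scheme \<Rightarrow> ('c \<Rightarrow> 'c)
    \<Rightarrow> ('a \<Rightarrow> 'c) \<Rightarrow> bool" where
  "lam_hom G T H S f \<longleftrightarrow> f \<in> hom G H \<and> (\<forall>x \<in> carrier G. f (T x) = S (f x))"

definition one_minus_t :: "('a, 'b) monoid_scheme \<Rightarrow> ('a \<Rightarrow> 'a) \<Rightarrow> 'a set" where
  "one_minus_t G T = (\<lambda>x. x \<otimes>\<^bsub>G\<^esub> inv\<^bsub>G\<^esub> (T x)) ` carrier G"

end

theory Submission
  imports Defs
begin


lemma lam_moduleD:
  assumes "lam_module G T"
  shows "comm_group G" "T \<in> hom G G" "bij_betw T (carrier G) (carrier G)"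
  using assms unfolding lam_module_def by auto

lemma transport:
  fixes G :: "('c,'e) monoid_scheme" and \<phi> :: "'c \<Rightarrow> 'd"
  assumes LM: "lam_module G T" and inj: "inj_on \<phi> (carrier G)"
  defines "\<psi> \<equiv> inv_into (carrier G) \<phi>"
  defines "G' \<equiv> \<lparr>carrier = \<phi> ` carrier G, monoid.mult = (\<lambda>x y. \<phi> (\<psi> x \<otimes>\<^bsub>G\<^esub> \<psi> y)), one = \<phi> \<one>\<^bsub>G\<^esub>\<rparr>"
  defines "T' \<equiv> (\<lambda>x. \<phi> (T (\<psi> x)))"
  shows "lam_module G' T'" "\<phi> \<in> hom G G'" "\<forall>a\<in>carrier G. T' (\<phi> a) = \<phi> (T a)"
    "one_minus_t G' T' = \<phi> ` one_minus_t G T" "carrier G' = \<phi> ` carrier G"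
proof -
  interpret G: comm_group G using lam_moduleD[OF LM] by simp
  have T: "T \<in> hom G G" "bij_betw T (carrier G) (carrier G)" using lam_moduleD[OF LM] by auto
  have pp: "\<And>a. a \<in> carrier G \<Longrightarrow> \<psi> (\<phi> a) = a" unfolding \<psi>_def using inj by (simp add: inv_into_f_f)
  have mm: "\<And>a b. a \<in> carrier G \<Longrightarrow> b \<in> carrier G \<Longrightarrow> \<phi> a \<otimes>\<^bsub>G'\<^esub> \<phi> b = \<phi> (a \<otimes>\<^bsub>G\<^esub> b)"
    unfolding G'_def by (simp add: pp)
  have cG0: "carrier G' = \<phi> ` carrier G" unfolding G'_def by simp
  have cg: "comm_group G'"
  proof (rule comm_groupI)
    show "x \<otimes>\<^bsub>G'\<^esub> y \<in> carrier G'" if H: "x \<in> carrier G'" "y \<in> carrier G'" for x y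
      using H mm cG0 by auto
    show "\<one>\<^bsub>G'\<^esub> \<in> carrier G'" unfolding G'_def by auto
    show "x \<otimes>\<^bsub>G'\<^esub> y \<otimes>\<^bsub>G'\<^esub> z = x \<otimes>\<^bsub>G'\<^esub> (y \<otimes>\<^bsub>G'\<^esub> z)" if H: "x \<in> carrier G'" "y \<in> carrier G'" "z \<in> carrier G'" for x y z
    proof -
      obtain a b c where "a \<in> carrier G" "b \<in> carrier G" "c \<in> carrier G" "x = \<phi> a" "y = \<phi> b" "z = \<phi> c"
        using H cG0 by auto
      then show ?thesis using mm by (simp add: G.m_assoc)
    qed
    show "x \<otimes>\<^bsub>G'\<^esub> y = y \<otimes>\<^bsub>G'\<^esub> x" if H: "x \<in> carrier G'" "y \<in> carrier G'" for x y
    proof -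
      obtain a b where "a \<in> carrier G" "b \<in> carrier G" "x = \<phi> a" "y = \<phi> b"
        using H cG0 by auto
      then show ?thesis using mm by (simp add: G.m_comm)
    qed
    show "\<one>\<^bsub>G'\<^esub> \<otimes>\<^bsub>G'\<^esub> x = x" if H: "x \<in> carrier G'" for x
    proof -
      obtain a where "a \<in> carrier G" "x = \<phi> a" using H cG0 by auto
      then show ?thesis using mm[of "\<one>\<^bsub>G\<^esub>" a] by (simp add: G'_def)
    qed
    show "\<exists>y\<in>carrier G'. y \<otimes>\<^bsub>G'\<^esub> x = \<one>\<^bsub>G'\<^esub>" if H: "x \<in> carrier G'" for x
    proof -
      obtain a where a: "a \<in> carrier G" "x = \<phi> a" using H cG0 by auto
      then show ?thesis using mm[of "inv\<^bsub>G\<^esub> a" a] by (intro bexI[of _ "\<phi> (inv\<^bsub>G\<^esub> a)"]) (auto simp: G'_def)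
    qed
  qed
  interpret G': comm_group G' by (rule cg)
  show hom: "\<phi> \<in> hom G G'" unfolding hom_def using mm by (auto simp: G'_def)
  interpret gh: group_hom G G' \<phi> by (unfold_locales) (rule hom)
  show cG': "carrier G' = \<phi> ` carrier G" unfolding G'_def by simp
  show TT: "\<forall>a\<in>carrier G. T' (\<phi> a) = \<phi> (T a)" unfolding T'_def by (simp add: pp)
  have Tc: "\<And>a. a \<in> carrier G \<Longrightarrow> T a \<in> carrier G" using T(1) unfolding hom_def by auto
  have Tm: "\<And>a b. a \<in> carrier G \<Longrightarrow> b \<in> carrier G \<Longrightarrow> T (a \<otimes>\<^bsub>G\<^esub> b) = T a \<otimes>\<^bsub>G\<^esub> T b"
    using T(1) unfolding hom_def by auto
  have "T' \<in> hom G' G'"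
    unfolding hom_def
  proof (safe)
    show "T' x \<in> carrier G'" if H: "x \<in> carrier G'" for x using that TT Tc cG' by auto
    show "T' (x \<otimes>\<^bsub>G'\<^esub> y) = T' x \<otimes>\<^bsub>G'\<^esub> T' y" if H: "x \<in> carrier G'" "y \<in> carrier G'" for x y
    proof -
      obtain a b where "a \<in> carrier G" "b \<in> carrier G" "x = \<phi> a" "y = \<phi> b"
        using H cG' by auto
      note ab = this
      have 1: "x \<otimes>\<^bsub>G'\<^esub> y = \<phi> (a \<otimes>\<^bsub>G\<^esub> b)" using mm ab by simp
      have 2: "T' (\<phi> (a \<otimes>\<^bsub>G\<^esub> b)) = \<phi> (T a \<otimes>\<^bsub>G\<^esub> T b)" using TT Tm ab G.m_closed by (simp del: gh.hom_mult)
      have 3: "\<phi> (T a \<otimes>\<^bsub>G\<^esub> T b) = T' x \<otimes>\<^bsub>G'\<^esub> T' y" using mm TT Tc ab by (simp del: gh.hom_mult)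
      show ?thesis using 1 2 3 by simp
    qed
  qed
  moreover have "bij_betw T' (carrier G') (carrier G')"
  proof -
    have b1: "bij_betw \<psi> (carrier G') (carrier G)" unfolding \<psi>_def cG'
      using inj by (simp add: bij_betw_inv_into inj_on_imp_bij_betw)
    have b2: "bij_betw \<phi> (carrier G) (carrier G')" using inj cG' by (simp add: inj_on_imp_bij_betw)
    have "bij_betw (\<phi> \<circ> (T \<circ> \<psi>)) (carrier G') (carrier G')"
      by (rule bij_betw_trans[OF bij_betw_trans[OF b1 T(2)] b2])
    then show ?thesis by (simp add: T'_def comp_def)
  qed
  ultimately show "lam_module G' T'" unfolding lam_module_def using cg by simp
  show "one_minus_t G' T' = \<phi> ` one_minus_t G T"
    unfolding one_minus_t_def cG' image_image
    by (rule image_cong[OF refl]) (simp add: TT Tc mm)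
qed



lemma div_carry: "(0::nat) < n \<Longrightarrow> (i+j) div n + ((i+j) mod n + k) div n = (i+j+k) div n"
  by (metis (no_types, opaque_lifting) add_cancel_left_left div_add1_eq
    group_cancel.add1 mod_div_trivial mod_mod_trivial)

lemma s_hom:
  assumes LM: "lam_module G T"
  shows "(\<lambda>x. x \<otimes>\<^bsub>G\<^esub> inv\<^bsub>G\<^esub> (T x)) \<in> hom G G"
proof -
  interpret G: comm_group G using lam_moduleD[OF LM] by simp
  have T: "T \<in> hom G G" using lam_moduleD[OF LM] by auto
  have Tc: "\<And>a. a \<in> carrier G \<Longrightarrow> T a \<in> carrier G" using T unfolding hom_def by auto
  have Tm: "\<And>a b. a \<in> carrier G \<Longrightarrow> b \<in> carrier G \<Longrightarrow> T (a \<otimes>\<^bsub>G\<^esub> b) = T a \<otimes>\<^bsub>G\<^esub> T b"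
    using T unfolding hom_def by auto
  show ?thesis unfolding hom_def
    by (auto simp: Tc Tm G.inv_mult G.m_ac)
qed

lemma omt_subgroup:
  assumes LM: "lam_module G T"
  shows "subgroup (one_minus_t G T) G"
proof -
  interpret G: comm_group G using lam_moduleD[OF LM] by simp
  interpret h: group_hom G G "\<lambda>x. x \<otimes>\<^bsub>G\<^esub> inv\<^bsub>G\<^esub> (T x)"
    by unfold_locales (rule s_hom[OF LM])
  show ?thesis unfolding one_minus_t_def by (rule h.img_is_subgroup)
qed

lemma (in group) mult_inv_eqI:
  assumes "a \<in> carrier G" "b \<in> carrier G" "c \<in> carrier G" "c \<otimes> b = a"
  shows "a \<otimes> inv b = c"
  using assms by (metis inv_solve_right)


lemma (in comm_group) inv_cancel_aux:
  "a \<in> carrier G \<Longrightarrow> b \<in> carrier G \<Longrightarrow> inv a \<otimes> b \<otimes> a = b"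
  by (metis m_assoc m_comm l_inv r_one inv_closed)

lemma step:
  fixes M :: "('c, 'e) monoid_scheme"
  assumes LM: "lam_module M TM" and fin: "finite (carrier M)"
    and xc: "x \<in> carrier M" and xS: "x \<notin> one_minus_t M TM"
  shows "\<exists>(M'::('c \<times> nat) monoid) T' d. lam_module M' T' \<and> finite (carrier M') \<and> 2 \<le> d \<and>
     card (carrier M') = card (carrier M) * d \<and> (\<lambda>m. (m, 0::nat)) \<in> hom M M' \<and>
     (\<forall>m\<in>carrier M. T' (m, 0) = (TM m, 0)) \<and>
     one_minus_t M' T' = (\<lambda>(u,k). (u \<otimes>\<^bsub>M\<^esub> x [^]\<^bsub>M\<^esub> k, 0)) ` (one_minus_t M TM \<times> {..<d}) \<and>
     card (one_minus_t M' T') = card (one_minus_t M TM) * d"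
proof -
  interpret M: comm_group M using lam_moduleD[OF LM] by simp
  define S where "S = one_minus_t M TM"
  have subS: "subgroup S M" unfolding S_def by (rule omt_subgroup[OF LM])
  have T: "TM \<in> hom M M" "bij_betw TM (carrier M) (carrier M)" using lam_moduleD[OF LM] by auto
  have Tc: "\<And>a. a \<in> carrier M \<Longrightarrow> TM a \<in> carrier M" using T unfolding hom_def by auto
  have Tm: "\<And>a b. a \<in> carrier M \<Longrightarrow> b \<in> carrier M \<Longrightarrow> TM (a \<otimes>\<^bsub>M\<^esub> b) = TM a \<otimes>\<^bsub>M\<^esub> TM b"
    using T unfolding hom_def by auto
  have Ex: "\<exists>d::nat. 0 < d \<and> x [^]\<^bsub>M\<^esub> d \<in> S"
  proof (intro exI conjI)
    have "carrier M \<noteq> {}" by auto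
    then show "0 < order M" unfolding order_def using fin by (simp add: card_gt_0_iff)
    show "x [^]\<^bsub>M\<^esub> order M \<in> S" using M.pow_order_eq_1[OF xc] subgroup.one_closed[OF subS] by simp
  qed
  define d where "d = (LEAST d::nat. 0 < d \<and> x [^]\<^bsub>M\<^esub> d \<in> S)"
  have d: "0 < d" "x [^]\<^bsub>M\<^esub> d \<in> S" using LeastI_ex[OF Ex] unfolding d_def by auto
  have dmin: "\<And>k. 0 < k \<Longrightarrow> k < d \<Longrightarrow> x [^]\<^bsub>M\<^esub> k \<notin> S"
    using not_less_Least unfolding d_def by blast
  have d2: "2 \<le> d"
  proof (rule ccontr)
    assume "\<not> 2 \<le> d"
    then have "d = 1" using d(1) by simp
    then show False using d(2) xS xc unfolding S_def by simp
  qed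
  obtain y where yc: "y \<in> carrier M" and ydef: "x [^]\<^bsub>M\<^esub> d = y \<otimes>\<^bsub>M\<^esub> inv\<^bsub>M\<^esub> (TM y)"
    using d(2) unfolding S_def one_minus_t_def by auto
  have Ty: "TM y = inv\<^bsub>M\<^esub> (x [^]\<^bsub>M\<^esub> d) \<otimes>\<^bsub>M\<^esub> y"
  proof -
    have "inv\<^bsub>M\<^esub> (x [^]\<^bsub>M\<^esub> d) = inv\<^bsub>M\<^esub> y \<otimes>\<^bsub>M\<^esub> TM y"
      using ydef yc Tc[OF yc] by (simp add: M.inv_mult M.inv_inv)
    then show ?thesis using yc Tc[OF yc] M.inv_cancel_aux by simp
  qed
  define M' :: "('c \<times> nat) monoid" where "M' = \<lparr>carrier = carrier M \<times> {..<d},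
     monoid.mult = (\<lambda>p q. (fst p \<otimes>\<^bsub>M\<^esub> fst q \<otimes>\<^bsub>M\<^esub> y [^]\<^bsub>M\<^esub> ((snd p + snd q) div d), (snd p + snd q) mod d)),
     one = (\<one>\<^bsub>M\<^esub>, 0)\<rparr>"
  define T' :: "'c \<times> nat \<Rightarrow> 'c \<times> nat" where "T' = (\<lambda>p. (TM (fst p) \<otimes>\<^bsub>M\<^esub> inv\<^bsub>M\<^esub> (x [^]\<^bsub>M\<^esub> snd p), snd p))"
  have cM': "carrier M' = carrier M \<times> {..<d}" by (simp add: M'_def)
  have mulM': "\<And>a i b j. (a,i) \<otimes>\<^bsub>M'\<^esub> (b,j) = (a \<otimes>\<^bsub>M\<^esub> b \<otimes>\<^bsub>M\<^esub> y [^]\<^bsub>M\<^esub> ((i+j) div d), (i+j) mod d)"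
    by (simp add: M'_def)
  have oneM': "\<one>\<^bsub>M'\<^esub> = (\<one>\<^bsub>M\<^esub>, 0)" by (simp add: M'_def)
  have cg: "comm_group M'"
  proof (rule comm_groupI)
    show "p \<otimes>\<^bsub>M'\<^esub> q \<in> carrier M'" if H: "p \<in> carrier M'" "q \<in> carrier M'" for p q
      using H d(1) yc by (cases p, cases q) (auto simp: cM' mulM')
    show "\<one>\<^bsub>M'\<^esub> \<in> carrier M'" using d(1) by (simp add: cM' oneM')
    show "p \<otimes>\<^bsub>M'\<^esub> q \<otimes>\<^bsub>M'\<^esub> r = p \<otimes>\<^bsub>M'\<^esub> (q \<otimes>\<^bsub>M'\<^esub> r)"
      if H: "p \<in> carrier M'" "q \<in> carrier M'" "r \<in> carrier M'" for p q r
    proof -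
      obtain a i b j c k where abc: "p = (a,i)" "q = (b,j)" "r = (c,k)"
        by (cases p, cases q, cases r) auto
      have mem: "a \<in> carrier M" "b \<in> carrier M" "c \<in> carrier M" using H abc by (auto simp: cM')
      define P where "P = (i+j) div d"
      define Q where "Q = ((i+j) mod d + k) div d"
      define R where "R = (j+k) div d"
      define U where "U = (i + (j+k) mod d) div d"
      have PQ: "P + Q = R + U" unfolding P_def Q_def R_def U_def
        using div_carry[OF d(1), of i j k] div_carry[OF d(1), of j k i]
        by (simp add: add.commute add.left_commute)
      have e: "y [^]\<^bsub>M\<^esub> P \<otimes>\<^bsub>M\<^esub> y [^]\<^bsub>M\<^esub> Q = y [^]\<^bsub>M\<^esub> R \<otimes>\<^bsub>M\<^esub> y [^]\<^bsub>M\<^esub> U"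
        using yc PQ by (simp add: M.nat_pow_mult)
      have "a \<otimes>\<^bsub>M\<^esub> b \<otimes>\<^bsub>M\<^esub> y [^]\<^bsub>M\<^esub> P \<otimes>\<^bsub>M\<^esub> c \<otimes>\<^bsub>M\<^esub> y [^]\<^bsub>M\<^esub> Q = (a \<otimes>\<^bsub>M\<^esub> b \<otimes>\<^bsub>M\<^esub> c) \<otimes>\<^bsub>M\<^esub> (y [^]\<^bsub>M\<^esub> P \<otimes>\<^bsub>M\<^esub> y [^]\<^bsub>M\<^esub> Q)"
        using mem yc by (simp add: M.m_ac)
      also have "\<dots> = (a \<otimes>\<^bsub>M\<^esub> b \<otimes>\<^bsub>M\<^esub> c) \<otimes>\<^bsub>M\<^esub> (y [^]\<^bsub>M\<^esub> R \<otimes>\<^bsub>M\<^esub> y [^]\<^bsub>M\<^esub> U)" by (simp add: e)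
      also have "\<dots> = a \<otimes>\<^bsub>M\<^esub> (b \<otimes>\<^bsub>M\<^esub> c \<otimes>\<^bsub>M\<^esub> y [^]\<^bsub>M\<^esub> R) \<otimes>\<^bsub>M\<^esub> y [^]\<^bsub>M\<^esub> U"
        using mem yc by (simp add: M.m_ac)
      finally have 1: "a \<otimes>\<^bsub>M\<^esub> b \<otimes>\<^bsub>M\<^esub> y [^]\<^bsub>M\<^esub> P \<otimes>\<^bsub>M\<^esub> c \<otimes>\<^bsub>M\<^esub> y [^]\<^bsub>M\<^esub> Q = a \<otimes>\<^bsub>M\<^esub> (b \<otimes>\<^bsub>M\<^esub> c \<otimes>\<^bsub>M\<^esub> y [^]\<^bsub>M\<^esub> R) \<otimes>\<^bsub>M\<^esub> y [^]\<^bsub>M\<^esub> U" .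
      have 2: "((i+j) mod d + k) mod d = (i + (j+k) mod d) mod d"
        by (simp add: mod_add_left_eq mod_add_right_eq add.assoc)
      show ?thesis using 1 2 unfolding abc P_def Q_def R_def U_def by (simp add: mulM')
    qed
    show "p \<otimes>\<^bsub>M'\<^esub> q = q \<otimes>\<^bsub>M'\<^esub> p" if H: "p \<in> carrier M'" "q \<in> carrier M'" for p q
      using H by (cases p, cases q) (auto simp: cM' mulM' add.commute M.m_comm)
    show "\<one>\<^bsub>M'\<^esub> \<otimes>\<^bsub>M'\<^esub> p = p" if H: "p \<in> carrier M'" for p
      using H by (cases p) (auto simp: cM' mulM' oneM')
    show "\<exists>q\<in>carrier M'. q \<otimes>\<^bsub>M'\<^esub> p = \<one>\<^bsub>M'\<^esub>" if H: "p \<in> carrier M'" for p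
    proof -
      obtain a i where ai: "p = (a,i)" by (cases p) auto
      have mem: "a \<in> carrier M" "i < d" using H ai by (auto simp: cM')
      define Y where "Y = y [^]\<^bsub>M\<^esub> (((d-i) mod d + i) div d)"
      have Yc: "Y \<in> carrier M" unfolding Y_def using yc by simp
      have m1: "((d-i) mod d + i) mod d = 0"
      proof -
        have "((d-i) mod d + i) mod d = (d - i + i) mod d" by (simp add: mod_add_left_eq)
        also have "\<dots> = 0" using mem(2) by simp
        finally show ?thesis .
      qed
      have m2: "inv\<^bsub>M\<^esub> a \<otimes>\<^bsub>M\<^esub> inv\<^bsub>M\<^esub> Y \<otimes>\<^bsub>M\<^esub> a \<otimes>\<^bsub>M\<^esub> Y = \<one>\<^bsub>M\<^esub>"
      proof -
        have e1: "inv\<^bsub>M\<^esub> a \<otimes>\<^bsub>M\<^esub> inv\<^bsub>M\<^esub> Y \<otimes>\<^bsub>M\<^esub> a \<otimes>\<^bsub>M\<^esub> Y = (inv\<^bsub>M\<^esub> a \<otimes>\<^bsub>M\<^esub> inv\<^bsub>M\<^esub> Y) \<otimes>\<^bsub>M\<^esub> (a \<otimes>\<^bsub>M\<^esub> Y)"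
          using mem Yc by (simp add: M.m_assoc)
        have e2: "inv\<^bsub>M\<^esub> a \<otimes>\<^bsub>M\<^esub> inv\<^bsub>M\<^esub> Y = inv\<^bsub>M\<^esub> (a \<otimes>\<^bsub>M\<^esub> Y)"
          using mem Yc by (simp add: M.inv_mult)
        have "(inv\<^bsub>M\<^esub> a \<otimes>\<^bsub>M\<^esub> inv\<^bsub>M\<^esub> Y) \<otimes>\<^bsub>M\<^esub> (a \<otimes>\<^bsub>M\<^esub> Y) = inv\<^bsub>M\<^esub> (a \<otimes>\<^bsub>M\<^esub> Y) \<otimes>\<^bsub>M\<^esub> (a \<otimes>\<^bsub>M\<^esub> Y)"
          by (simp only: e2)
        also have "\<dots> = \<one>\<^bsub>M\<^esub>" using mem Yc by simp
        finally show ?thesis using e1 by simp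
      qed
      show ?thesis
        using mem Yc d(1) m1 m2
        by (intro bexI[of _ "(inv\<^bsub>M\<^esub> a \<otimes>\<^bsub>M\<^esub> inv\<^bsub>M\<^esub> Y, (d-i) mod d)"]) (auto simp: ai cM' mulM' oneM' Y_def)
    qed
  qed
  interpret M': comm_group M' by (rule cg)
  have T'c: "T' p \<in> carrier M'" if "p \<in> carrier M'" for p
    using that xc Tc by (cases p) (auto simp: T'_def cM')
  have T'hom: "T' \<in> hom M' M'"
    unfolding hom_def
  proof (safe)
    show "T' p \<in> carrier M'" if "p \<in> carrier M'" for p using T'c that .
    show "T' (p \<otimes>\<^bsub>M'\<^esub> q) = T' p \<otimes>\<^bsub>M'\<^esub> T' q" if H: "p \<in> carrier M'" "q \<in> carrier M'" for p q
    proof -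
      obtain a i b j where ab: "p = (a,i)" "q = (b,j)" by (cases p, cases q) auto
      have mem: "a \<in> carrier M" "b \<in> carrier M" using H ab by (auto simp: cM')
      define P where "P = (i+j) div d"
      define R where "R = (i+j) mod d"
      have TyP: "TM (y [^]\<^bsub>M\<^esub> P) = inv\<^bsub>M\<^esub> (x [^]\<^bsub>M\<^esub> (d*P)) \<otimes>\<^bsub>M\<^esub> y [^]\<^bsub>M\<^esub> P"
      proof -
        have "TM (y [^]\<^bsub>M\<^esub> P) = (TM y) [^]\<^bsub>M\<^esub> P" using hom_nat_pow[OF T(1) yc M.is_group M.is_group] .
        also have "\<dots> = (inv\<^bsub>M\<^esub> (x [^]\<^bsub>M\<^esub> d)) [^]\<^bsub>M\<^esub> P \<otimes>\<^bsub>M\<^esub> y [^]\<^bsub>M\<^esub> P" using Ty xc yc by (simp add: M.nat_pow_distrib)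
        also have "\<dots> = inv\<^bsub>M\<^esub> (x [^]\<^bsub>M\<^esub> (d*P)) \<otimes>\<^bsub>M\<^esub> y [^]\<^bsub>M\<^esub> P" using xc by (simp add: M.nat_pow_inv M.nat_pow_pow)
        finally show ?thesis .
      qed
      have key: "inv\<^bsub>M\<^esub> (x [^]\<^bsub>M\<^esub> (d*P)) \<otimes>\<^bsub>M\<^esub> inv\<^bsub>M\<^esub> (x [^]\<^bsub>M\<^esub> R) = inv\<^bsub>M\<^esub> (x [^]\<^bsub>M\<^esub> i) \<otimes>\<^bsub>M\<^esub> inv\<^bsub>M\<^esub> (x [^]\<^bsub>M\<^esub> j)"
      proof -
        have "inv\<^bsub>M\<^esub> (x [^]\<^bsub>M\<^esub> (d*P)) \<otimes>\<^bsub>M\<^esub> inv\<^bsub>M\<^esub> (x [^]\<^bsub>M\<^esub> R) = inv\<^bsub>M\<^esub> (x [^]\<^bsub>M\<^esub> (d*P) \<otimes>\<^bsub>M\<^esub> x [^]\<^bsub>M\<^esub> R)"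
          using xc by (simp add: M.inv_mult)
        also have "\<dots> = inv\<^bsub>M\<^esub> (x [^]\<^bsub>M\<^esub> (i+j))" using xc
          by (simp add: M.nat_pow_mult P_def R_def mult_div_mod_eq)
        also have "\<dots> = inv\<^bsub>M\<^esub> (x [^]\<^bsub>M\<^esub> i \<otimes>\<^bsub>M\<^esub> x [^]\<^bsub>M\<^esub> j)" using xc by (simp add: M.nat_pow_mult)
        also have "\<dots> = inv\<^bsub>M\<^esub> (x [^]\<^bsub>M\<^esub> i) \<otimes>\<^bsub>M\<^esub> inv\<^bsub>M\<^esub> (x [^]\<^bsub>M\<^esub> j)" using xc by (simp add: M.inv_mult)
        finally show ?thesis .
      qed
      have "TM (a \<otimes>\<^bsub>M\<^esub> b \<otimes>\<^bsub>M\<^esub> y [^]\<^bsub>M\<^esub> P) \<otimes>\<^bsub>M\<^esub> inv\<^bsub>M\<^esub> (x [^]\<^bsub>M\<^esub> R) = TM a \<otimes>\<^bsub>M\<^esub> TM b \<otimes>\<^bsub>M\<^esub> (inv\<^bsub>M\<^esub> (x [^]\<^bsub>M\<^esub> (d*P)) \<otimes>\<^bsub>M\<^esub> y [^]\<^bsub>M\<^esub> P) \<otimes>\<^bsub>M\<^esub> inv\<^bsub>M\<^esub> (x [^]\<^bsub>M\<^esub> R)"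
        using mem yc Tc TyP by (simp add: Tm)
      also have "\<dots> = (TM a \<otimes>\<^bsub>M\<^esub> TM b \<otimes>\<^bsub>M\<^esub> y [^]\<^bsub>M\<^esub> P) \<otimes>\<^bsub>M\<^esub> (inv\<^bsub>M\<^esub> (x [^]\<^bsub>M\<^esub> (d*P)) \<otimes>\<^bsub>M\<^esub> inv\<^bsub>M\<^esub> (x [^]\<^bsub>M\<^esub> R))"
        using mem yc xc Tc by (simp add: M.m_ac)
      also have "\<dots> = (TM a \<otimes>\<^bsub>M\<^esub> TM b \<otimes>\<^bsub>M\<^esub> y [^]\<^bsub>M\<^esub> P) \<otimes>\<^bsub>M\<^esub> (inv\<^bsub>M\<^esub> (x [^]\<^bsub>M\<^esub> i) \<otimes>\<^bsub>M\<^esub> inv\<^bsub>M\<^esub> (x [^]\<^bsub>M\<^esub> j))"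
        by (simp add: key)
      also have "\<dots> = TM a \<otimes>\<^bsub>M\<^esub> inv\<^bsub>M\<^esub> (x [^]\<^bsub>M\<^esub> i) \<otimes>\<^bsub>M\<^esub> (TM b \<otimes>\<^bsub>M\<^esub> inv\<^bsub>M\<^esub> (x [^]\<^bsub>M\<^esub> j)) \<otimes>\<^bsub>M\<^esub> y [^]\<^bsub>M\<^esub> P"
        using mem yc xc Tc by (simp add: M.m_ac)
      finally have 1: "TM (a \<otimes>\<^bsub>M\<^esub> b \<otimes>\<^bsub>M\<^esub> y [^]\<^bsub>M\<^esub> P) \<otimes>\<^bsub>M\<^esub> inv\<^bsub>M\<^esub> (x [^]\<^bsub>M\<^esub> R) = TM a \<otimes>\<^bsub>M\<^esub> inv\<^bsub>M\<^esub> (x [^]\<^bsub>M\<^esub> i) \<otimes>\<^bsub>M\<^esub> (TM b \<otimes>\<^bsub>M\<^esub> inv\<^bsub>M\<^esub> (x [^]\<^bsub>M\<^esub> j)) \<otimes>\<^bsub>M\<^esub> y [^]\<^bsub>M\<^esub> P" .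
      show ?thesis using 1 unfolding ab P_def R_def by (simp add: T'_def mulM')
    qed
  qed
  have T'bij: "bij_betw T' (carrier M') (carrier M')"
    unfolding bij_betw_def
  proof
    have injT: "inj_on TM (carrier M)" using T(2) by (simp add: bij_betw_def)
    show "inj_on T' (carrier M')"
    proof (rule inj_onI)
      fix p q assume H: "p \<in> carrier M'" "q \<in> carrier M'" "T' p = T' q"
      obtain a i b j where ab: "p = (a,i)" "q = (b,j)" by (cases p, cases q) auto
      have mem: "a \<in> carrier M" "b \<in> carrier M" using H ab by (auto simp: cM')
      have ij: "i = j" using H(3) ab by (simp add: T'_def)
      have "TM a \<otimes>\<^bsub>M\<^esub> inv\<^bsub>M\<^esub> (x [^]\<^bsub>M\<^esub> i) = TM b \<otimes>\<^bsub>M\<^esub> inv\<^bsub>M\<^esub> (x [^]\<^bsub>M\<^esub> i)" using H(3) ab ij by (simp add: T'_def)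
      then have "TM a = TM b" using mem Tc xc by (simp add: M.right_cancel)
      then have "a = b" using injT mem by (simp add: inj_on_eq_iff)
      then show "p = q" using ab ij by simp
    qed
    show "T' ` carrier M' = carrier M'"
    proof
      show "T' ` carrier M' \<subseteq> carrier M'" using T'c by auto
      show "carrier M' \<subseteq> T' ` carrier M'"
      proof
        fix p assume H: "p \<in> carrier M'"
        obtain a i where ai: "p = (a,i)" by (cases p) auto
        have mem: "a \<in> carrier M" "i < d" using H ai by (auto simp: cM')
        define z where "z = inv_into (carrier M) TM (a \<otimes>\<^bsub>M\<^esub> x [^]\<^bsub>M\<^esub> i)"
        have zc: "z \<in> carrier M" unfolding z_def using T(2) mem xc
          by (metis M.m_closed M.nat_pow_closed bij_betw_def inv_into_into)
        have Tz: "TM z = a \<otimes>\<^bsub>M\<^esub> x [^]\<^bsub>M\<^esub> i" unfolding z_def using T(2) mem xc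
          by (metis M.m_closed M.nat_pow_closed bij_betw_def f_inv_into_f)
        have "T' (z, i) = p" using Tz mem xc ai by (simp add: T'_def M.m_assoc)
        moreover have "(z,i) \<in> carrier M'" using zc mem by (simp add: cM')
        ultimately show "p \<in> T' ` carrier M'" by force
      qed
    qed
  qed
  have LM': "lam_module M' T'" unfolding lam_module_def using cg T'hom T'bij by simp
  have fin': "finite (carrier M')" using fin by (simp add: cM')
  have card': "card (carrier M') = card (carrier M) * d" by (simp add: cM' card_cartesian_product)
  have f0hom: "(\<lambda>m. (m, 0::nat)) \<in> hom M M'"
    unfolding hom_def using d(1) by (auto simp: cM' mulM')
  have f0T: "\<forall>m\<in>carrier M. T' (m, 0) = (TM m, 0)" by (simp add: T'_def Tc)
  have Sc: "S \<subseteq> carrier M" using subS subgroup.subset by blast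
  have omt1: "one_minus_t M' T' = (\<lambda>(a,i). (a \<otimes>\<^bsub>M\<^esub> inv\<^bsub>M\<^esub> (TM a) \<otimes>\<^bsub>M\<^esub> x [^]\<^bsub>M\<^esub> i, 0::nat)) ` (carrier M \<times> {..<d})"
    unfolding one_minus_t_def cM'[symmetric]
  proof (rule image_cong[OF refl])
    fix p assume H: "p \<in> carrier M'"
    obtain a i where ai: "p = (a,i)" by (cases p) auto
    have mem: "a \<in> carrier M" "i < d" using H ai by (auto simp: cM')
    have cc: "(a \<otimes>\<^bsub>M\<^esub> inv\<^bsub>M\<^esub> (TM a) \<otimes>\<^bsub>M\<^esub> x [^]\<^bsub>M\<^esub> i, 0::nat) \<in> carrier M'" using mem Tc xc d(1) by (simp add: cM')
    have "(a \<otimes>\<^bsub>M\<^esub> inv\<^bsub>M\<^esub> (TM a) \<otimes>\<^bsub>M\<^esub> x [^]\<^bsub>M\<^esub> i) \<otimes>\<^bsub>M\<^esub> (TM a \<otimes>\<^bsub>M\<^esub> inv\<^bsub>M\<^esub> (x [^]\<^bsub>M\<^esub> i)) = a \<otimes>\<^bsub>M\<^esub> (inv\<^bsub>M\<^esub> (TM a) \<otimes>\<^bsub>M\<^esub> TM a) \<otimes>\<^bsub>M\<^esub> (x [^]\<^bsub>M\<^esub> i \<otimes>\<^bsub>M\<^esub> inv\<^bsub>M\<^esub> (x [^]\<^bsub>M\<^esub> i))"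
      using mem Tc xc by (simp add: M.m_ac)
    also have "\<dots> = a" using mem Tc xc by simp
    finally have e: "(a \<otimes>\<^bsub>M\<^esub> inv\<^bsub>M\<^esub> (TM a) \<otimes>\<^bsub>M\<^esub> x [^]\<^bsub>M\<^esub> i) \<otimes>\<^bsub>M\<^esub> (TM a \<otimes>\<^bsub>M\<^esub> inv\<^bsub>M\<^esub> (x [^]\<^bsub>M\<^esub> i)) = a" .
    have "(a \<otimes>\<^bsub>M\<^esub> inv\<^bsub>M\<^esub> (TM a) \<otimes>\<^bsub>M\<^esub> x [^]\<^bsub>M\<^esub> i, 0::nat) \<otimes>\<^bsub>M'\<^esub> T' p = p"
      using e mem ai by (simp add: T'_def mulM')
    then show "p \<otimes>\<^bsub>M'\<^esub> inv\<^bsub>M'\<^esub> (T' p) = (case p of (a, i) \<Rightarrow> (a \<otimes>\<^bsub>M\<^esub> inv\<^bsub>M\<^esub> (TM a) \<otimes>\<^bsub>M\<^esub> x [^]\<^bsub>M\<^esub> i, 0))"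
      using M'.mult_inv_eqI[OF H T'c[OF H] cc] ai by simp
  qed
  have omt2: "one_minus_t M' T' = (\<lambda>(u,k). (u \<otimes>\<^bsub>M\<^esub> x [^]\<^bsub>M\<^esub> k, 0::nat)) ` (S \<times> {..<d})"
  proof
    show "one_minus_t M' T' \<subseteq> (\<lambda>(u,k). (u \<otimes>\<^bsub>M\<^esub> x [^]\<^bsub>M\<^esub> k, 0::nat)) ` (S \<times> {..<d})"
    proof
      fix z assume "z \<in> one_minus_t M' T'"
      then obtain a i where ai: "a \<in> carrier M" "i < d" "z = (a \<otimes>\<^bsub>M\<^esub> inv\<^bsub>M\<^esub> (TM a) \<otimes>\<^bsub>M\<^esub> x [^]\<^bsub>M\<^esub> i, 0)"
        unfolding omt1 by auto
      have "a \<otimes>\<^bsub>M\<^esub> inv\<^bsub>M\<^esub> (TM a) \<in> S" using ai unfolding S_def one_minus_t_def by auto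
      then show "z \<in> (\<lambda>(u,k). (u \<otimes>\<^bsub>M\<^esub> x [^]\<^bsub>M\<^esub> k, 0::nat)) ` (S \<times> {..<d})"
        using ai by (intro rev_image_eqI[of "(a \<otimes>\<^bsub>M\<^esub> inv\<^bsub>M\<^esub> (TM a), i)"]) auto
    qed
    show "(\<lambda>(u,k). (u \<otimes>\<^bsub>M\<^esub> x [^]\<^bsub>M\<^esub> k, 0::nat)) ` (S \<times> {..<d}) \<subseteq> one_minus_t M' T'"
    proof
      fix z assume "z \<in> (\<lambda>(u,k). (u \<otimes>\<^bsub>M\<^esub> x [^]\<^bsub>M\<^esub> k, 0::nat)) ` (S \<times> {..<d})"
      then obtain u k where uk: "u \<in> S" "k < d" "z = (u \<otimes>\<^bsub>M\<^esub> x [^]\<^bsub>M\<^esub> k, 0)" by auto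
      then obtain a where a: "a \<in> carrier M" "u = a \<otimes>\<^bsub>M\<^esub> inv\<^bsub>M\<^esub> (TM a)" unfolding S_def one_minus_t_def by auto
      show "z \<in> one_minus_t M' T'" unfolding omt1
        using uk a by (intro rev_image_eqI[of "(a, k)"]) auto
    qed
  qed
  have injU: "inj_on (\<lambda>(u,k). (u \<otimes>\<^bsub>M\<^esub> x [^]\<^bsub>M\<^esub> k, 0::nat)) (S \<times> {..<d})"
  proof -
    have keq: "k = k'" if H: "u \<in> S" "u' \<in> S" "k \<le> k'" "k' < d" "u \<otimes>\<^bsub>M\<^esub> x [^]\<^bsub>M\<^esub> k = u' \<otimes>\<^bsub>M\<^esub> x [^]\<^bsub>M\<^esub> k'" for u u' k k'
    proof (rule ccontr)
      assume ne: "k \<noteq> k'"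
      define m where "m = k' - k"
      have mpos: "0 < m" "m < d" using H ne unfolding m_def by auto
      have uc: "u \<in> carrier M" "u' \<in> carrier M" using H Sc by auto
      have "x [^]\<^bsub>M\<^esub> k' = x [^]\<^bsub>M\<^esub> k \<otimes>\<^bsub>M\<^esub> x [^]\<^bsub>M\<^esub> m" using xc H(3) by (simp add: M.nat_pow_mult m_def)
      then have "u \<otimes>\<^bsub>M\<^esub> x [^]\<^bsub>M\<^esub> k = (u' \<otimes>\<^bsub>M\<^esub> x [^]\<^bsub>M\<^esub> m) \<otimes>\<^bsub>M\<^esub> x [^]\<^bsub>M\<^esub> k" using H(5) uc xc by (simp add: M.m_ac)
      then have um: "u = u' \<otimes>\<^bsub>M\<^esub> x [^]\<^bsub>M\<^esub> m" using uc xc by (simp add: M.right_cancel)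
      have "inv\<^bsub>M\<^esub> u' \<otimes>\<^bsub>M\<^esub> u = x [^]\<^bsub>M\<^esub> m" using um uc xc by (simp add: M.m_assoc[symmetric])
      moreover have "inv\<^bsub>M\<^esub> u' \<otimes>\<^bsub>M\<^esub> u \<in> S"
        using H(1,2) subS by (simp add: subgroup.m_closed subgroup.m_inv_closed)
      ultimately show False using dmin mpos by simp
    qed
    show ?thesis
    proof (rule inj_onI, clarsimp)
      fix u k u' k' assume H: "u \<in> S" "k < d" "u' \<in> S" "k' < d" "u \<otimes>\<^bsub>M\<^esub> x [^]\<^bsub>M\<^esub> k = u' \<otimes>\<^bsub>M\<^esub> x [^]\<^bsub>M\<^esub> k'"
      have "k = k'"
      proof (cases "k \<le> k'")
        case True then show ?thesis using keq H by blast
      next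
        case False then show ?thesis using keq[of u' u k' k] H by simp
      qed
      moreover have "u \<in> carrier M" "u' \<in> carrier M" using H Sc by auto
      ultimately show "u = u' \<and> k = k'" using H xc by simp
    qed
  qed
  have cardS': "card (one_minus_t M' T') = card S * d"
    unfolding omt2 using card_image[OF injU] by (simp add: card_cartesian_product)
  show ?thesis
    apply (rule exI[of _ M'], rule exI[of _ T'], rule exI[of _ d])
    using LM' fin' d2 card' f0hom f0T omt2 cardS' unfolding S_def by blast
qed



lemma transport_ex:
  fixes G :: "('c,'e) monoid_scheme" and \<phi> :: "'c \<Rightarrow> 'd"
  assumes "lam_module G T" and "inj_on \<phi> (carrier G)"
  shows "\<exists>(G'::'d monoid) T'. lam_module G' T' \<and> \<phi> \<in> hom G G' \<and> (\<forall>a\<in>carrier G. T' (\<phi> a) = \<phi> (T a))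
    \<and> one_minus_t G' T' = \<phi> ` one_minus_t G T \<and> carrier G' = \<phi> ` carrier G"
  using transport[OF assms] by blast

definition good :: "('a, 'b) monoid_scheme \<Rightarrow> ('a \<Rightarrow> 'a) \<Rightarrow> ('c, 'd) monoid_scheme \<Rightarrow> ('c \<Rightarrow> 'c) \<Rightarrow> ('a \<Rightarrow> 'c) \<Rightarrow> bool" where
  "good N tN M TM f \<longleftrightarrow> lam_module M TM \<and> finite (carrier M) \<and> lam_hom N tN M TM f \<and> inj_on f (carrier N)
     \<and> one_minus_t M TM \<subseteq> f ` carrier N
     \<and> card (carrier M) * card (one_minus_t N tN) = card (carrier N) * card (one_minus_t M TM)"

lemma omt_sub: "one_minus_t G T \<subseteq> carrier G" if "lam_module G T"
  using omt_subgroup[OF that] subgroup.subset by blast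

lemma omt_card_pos:
  assumes "lam_module G T" "finite (carrier G)"
  shows "0 < card (one_minus_t G T)"
proof -
  have "\<one>\<^bsub>G\<^esub> \<in> one_minus_t G T" using omt_subgroup[OF assms(1)] subgroup.one_closed by blast
  moreover have "finite (one_minus_t G T)" using omt_sub[OF assms(1)] assms(2) by (rule finite_subset)
  ultimately show ?thesis using card_gt_0_iff by blast
qed

lemma good_step:
  fixes N :: "('a, 'b) monoid_scheme" and M :: "('a \<times> 'a) monoid"
  assumes LN: "lam_module N tN" and finN: "finite (carrier N)"
    and G: "good N tN M TM f" and ne: "one_minus_t M TM \<noteq> f ` carrier N"
  shows "\<exists>(M2::('a \<times> 'a) monoid) T2 f2. good N tN M2 T2 f2 \<and> card (one_minus_t M TM) < card (one_minus_t M2 T2)"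
proof -
  have LM: "lam_module M TM" and finM: "finite (carrier M)" and LH: "lam_hom N tN M TM f"
    and injf: "inj_on f (carrier N)" and sub: "one_minus_t M TM \<subseteq> f ` carrier N"
    and cardeq: "card (carrier M) * card (one_minus_t N tN) = card (carrier N) * card (one_minus_t M TM)"
    using G unfolding good_def by auto
  interpret N: comm_group N using lam_moduleD[OF LN] by simp
  interpret M: comm_group M using lam_moduleD[OF LM] by simp
  have fhom: "f \<in> hom N M" and fT: "\<forall>n\<in>carrier N. f (tN n) = TM (f n)" using LH unfolding lam_hom_def by auto
  interpret fh: group_hom N M f by unfold_locales (rule fhom)
  have fNsub: "subgroup (f ` carrier N) M" by (rule fh.img_is_subgroup)
  obtain x where x: "x \<in> f ` carrier N" "x \<notin> one_minus_t M TM" using sub ne by blast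
  have xc: "x \<in> carrier M" using x(1) fNsub subgroup.subset by blast
  obtain M' :: "(('a \<times> 'a) \<times> nat) monoid" and T' d where M':
    "lam_module M' T'" "finite (carrier M')" "2 \<le> d"
    "card (carrier M') = card (carrier M) * d" "(\<lambda>m. (m, 0::nat)) \<in> hom M M'"
    "\<forall>m\<in>carrier M. T' (m, 0) = (TM m, 0)"
    "one_minus_t M' T' = (\<lambda>(u,k). (u \<otimes>\<^bsub>M\<^esub> x [^]\<^bsub>M\<^esub> k, 0)) ` (one_minus_t M TM \<times> {..<d})"
    "card (one_minus_t M' T') = card (one_minus_t M TM) * d"
    using step[OF LM finM xc x(2)] by blast

  define f0 :: "'a \<times> 'a \<Rightarrow> ('a \<times> 'a) \<times> nat" where "f0 = (\<lambda>m. (m, 0::nat))"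
  interpret M': comm_group M' using lam_moduleD[OF M'(1)] by simp
  have f0hom: "f0 \<in> hom M M'" using M'(5) unfolding f0_def .
  interpret f0h: group_hom M M' f0 by unfold_locales (rule f0hom)
  define S' where "S' = one_minus_t M' T'"
  have S'sub: "S' \<subseteq> f0 ` f ` carrier N"
  proof
    fix z assume "z \<in> S'"
    then have "z \<in> (\<lambda>(u,k). (u \<otimes>\<^bsub>M\<^esub> x [^]\<^bsub>M\<^esub> k, 0::nat)) ` (one_minus_t M TM \<times> {..<d})"
      unfolding S'_def M'(7) .
    then obtain p where p: "p \<in> one_minus_t M TM \<times> {..<d}" "z = (\<lambda>(u,k). (u \<otimes>\<^bsub>M\<^esub> x [^]\<^bsub>M\<^esub> k, 0::nat)) p"
      by (rule imageE)
    obtain u and k :: nat where "p = (u, k)" by (cases p)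
    then have uk: "u \<in> one_minus_t M TM" "z = (u \<otimes>\<^bsub>M\<^esub> x [^]\<^bsub>M\<^esub> k, 0)" using p by auto
    have "u \<in> f ` carrier N" using uk(1) sub by blast
    moreover have "x [^]\<^bsub>M\<^esub> k \<in> f ` carrier N"
    proof -
      obtain n where n: "n \<in> carrier N" "x = f n" using x(1) by blast
      then have "x [^]\<^bsub>M\<^esub> k = f (n [^]\<^bsub>N\<^esub> k)" by (simp add: fh.hom_nat_pow)
      then show ?thesis using n by simp
    qed
    ultimately have "u \<otimes>\<^bsub>M\<^esub> x [^]\<^bsub>M\<^esub> k \<in> f ` carrier N" using fNsub by (simp add: subgroup.m_closed)
    then show "z \<in> f0 ` f ` carrier N" using uk(2) unfolding f0_def by blast
  qed
  have cardS'N: "card S' \<le> card (carrier N)"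
  proof -
    have "card S' \<le> card (f0 ` f ` carrier N)" using S'sub finN by (simp add: card_mono)
    also have "\<dots> \<le> card (carrier N)" by (metis card_image_le finN finite_imageI image_image)
    finally show ?thesis .
  qed
  have sNpos: "0 < card (one_minus_t N tN)" by (rule omt_card_pos[OF LN finN])
  have SMpos: "0 < card (one_minus_t M TM)" by (rule omt_card_pos[OF LM finM])
  have cardM'eq: "card (carrier M') * card (one_minus_t N tN) = card (carrier N) * card S'"
    using cardeq M'(4) M'(8) unfolding S'_def by (simp add: algebra_simps)
  have "card (carrier M') \<le> card (carrier M') * card (one_minus_t N tN)" using sNpos by simp
  also have "\<dots> \<le> card (carrier N) * card (carrier N)" using cardM'eq cardS'N by simp
  finally have cM'le: "card (carrier M') \<le> card (carrier N \<times> carrier N)" by (simp add: card_cartesian_product)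
  obtain \<phi> where \<phi>: "\<phi> ` carrier M' \<subseteq> carrier N \<times> carrier N" "inj_on \<phi> (carrier M')"
    using card_le_inj[OF M'(2) _ cM'le] finN by blast
  obtain M2 :: "('a \<times> 'a) monoid" and T2 where M2: "lam_module M2 T2" "\<phi> \<in> hom M' M2"
    "\<forall>a\<in>carrier M'. T2 (\<phi> a) = \<phi> (T' a)" "one_minus_t M2 T2 = \<phi> ` one_minus_t M' T'"
    "carrier M2 = \<phi> ` carrier M'"
    using transport_ex[OF M'(1) \<phi>(2)] by blast
  interpret M2: comm_group M2 using lam_moduleD[OF M2(1)] by simp
  interpret ph: group_hom M' M2 \<phi> by unfold_locales (rule M2(2))
  define f2 where "f2 = (\<lambda>n. \<phi> (f0 (f n)))"
  have fc: "\<And>n. n \<in> carrier N \<Longrightarrow> f n \<in> carrier M" by simp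
  have f0c: "\<And>m. m \<in> carrier M \<Longrightarrow> f0 m \<in> carrier M'" by simp
  have f2hom: "f2 \<in> hom N M2"
    unfolding hom_def f2_def by (auto simp: fc f0c)
  have f2T: "\<forall>n\<in>carrier N. f2 (tN n) = T2 (f2 n)"
  proof
    fix n assume n: "n \<in> carrier N"
    have fn: "f n \<in> carrier M" using n by simp
    have "(f n, 0::nat) \<in> carrier M'" using f0c[OF fn] unfolding f0_def .
    then have "T2 (\<phi> (f n, 0)) = \<phi> (T' (f n, 0))" using M2(3) by blast
    also have "\<dots> = \<phi> (TM (f n), 0)" using M'(6) fn by simp
    finally show "f2 (tN n) = T2 (f2 n)" unfolding f2_def f0_def using fT n by simp
  qed
  have injf2: "inj_on f2 (carrier N)"
  proof (rule inj_onI)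
    fix a b assume H: "a \<in> carrier N" "b \<in> carrier N" "f2 a = f2 b"
    then have "f0 (f a) = f0 (f b)" using \<phi>(2) unfolding f2_def by (simp add: inj_on_eq_iff)
    then have "f a = f b" unfolding f0_def by simp
    then show "a = b" using injf H by (simp add: inj_on_eq_iff)
  qed
  have S2: "one_minus_t M2 T2 = \<phi> ` S'" using M2(4) unfolding S'_def .
  have S2sub: "one_minus_t M2 T2 \<subseteq> f2 ` carrier N" unfolding S2 f2_def using S'sub by auto
  have S'c: "S' \<subseteq> carrier M'" unfolding S'_def by (rule omt_sub[OF M'(1)])
  have cardS2: "card (one_minus_t M2 T2) = card S'"
    unfolding S2 using \<phi>(2) S'c by (simp add: card_image inj_on_subset)
  have cardM2: "card (carrier M2) = card (carrier M')"
    unfolding M2(5) using \<phi>(2) by (simp add: card_image)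
  have good2: "good N tN M2 T2 f2"
    unfolding good_def lam_hom_def
    using M2(1) M2(5) M'(2) f2hom f2T injf2 S2sub cardS2 cardM2 cardM'eq by simp
  have "card (one_minus_t M TM) < card (one_minus_t M2 T2)"
    using cardS2 M'(8) M'(3) SMpos unfolding S'_def by simp
  then show ?thesis using good2 by blast
qed

lemma good_base:
  fixes N :: "('a, 'b) monoid_scheme"
  assumes LN: "lam_module N tN" and finN: "finite (carrier N)"
  shows "\<exists>(M::('a \<times> 'a) monoid) TM f. good N tN M TM f"
proof -
  define \<phi> :: "'a \<Rightarrow> 'a \<times> 'a" where "\<phi> = (\<lambda>a. (a, a))"
  have inj: "inj_on \<phi> (carrier N)" unfolding \<phi>_def by (rule inj_onI) simp
  obtain M :: "('a \<times> 'a) monoid" and T where M: "lam_module M T" "\<phi> \<in> hom N M"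
    "\<forall>a\<in>carrier N. T (\<phi> a) = \<phi> (tN a)" "one_minus_t M T = \<phi> ` one_minus_t N tN"
    "carrier M = \<phi> ` carrier N"
    using transport_ex[OF LN inj] by blast
  have sNc: "one_minus_t N tN \<subseteq> carrier N" by (rule omt_sub[OF LN])
  have "good N tN M T \<phi>"
    unfolding good_def lam_hom_def
  proof (intro conjI)
    show "lam_module M T" by fact
    show "finite (carrier M)" using M(5) finN by simp
    show "\<phi> \<in> hom N M" by fact
    show "\<forall>x\<in>carrier N. \<phi> (tN x) = T (\<phi> x)" using M(3) by simp
    show "inj_on \<phi> (carrier N)" by fact
    show "one_minus_t M T \<subseteq> \<phi> ` carrier N" using M(4) sNc by auto
    show "card (carrier M) * card (one_minus_t N tN) = card (carrier N) * card (one_minus_t M T)"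
      using M(4,5) inj sNc by (simp add: card_image inj_on_subset)
  qed
  then show ?thesis by blast
qed

lemma good_final:
  fixes N :: "('a, 'b) monoid_scheme" and M :: "('a \<times> 'a) monoid"
  assumes LN: "lam_module N tN" and finN: "finite (carrier N)" and G: "good N tN M TM f"
  shows "\<exists>(M'::('a \<times> 'a) monoid) TM' f'. good N tN M' TM' f' \<and> one_minus_t M' TM' = f' ` carrier N"
  using G
proof (induction "card (carrier N) - card (one_minus_t M TM)" arbitrary: M TM f rule: less_induct)
  case less
  show ?case
  proof (cases "one_minus_t M TM = f ` carrier N")
    case True then show ?thesis using less.prems by blast
  next
    case False
    obtain M2 :: "('a \<times> 'a) monoid" and T2 f2 where g2: "good N tN M2 T2 f2"
      and lt: "card (one_minus_t M TM) < card (one_minus_t M2 T2)"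
      using good_step[OF LN finN less.prems False] by blast
    have "card (one_minus_t M2 T2) \<le> card (f2 ` carrier N)"
      using g2 finN unfolding good_def by (simp add: card_mono)
    also have "\<dots> \<le> card (carrier N)" using finN by (rule card_image_le)
    finally have "card (carrier N) - card (one_minus_t M2 T2) < card (carrier N) - card (one_minus_t M TM)"
      using lt by simp
    then show ?thesis using less.hyps g2 by blast
  qed
qed

theorem theorem4p3:
  fixes N :: "('a, 'b) monoid_scheme" and tN :: "'a \<Rightarrow> 'a" and l :: nat
  assumes "lam_module N tN"
    and "finite (carrier N)"
    and "card (rcosets\<^bsub>N\<^esub> (one_minus_t N tN)) = l"
  shows "\<exists>(M :: ('a \<times> 'a) monoid) tM f.
           lam_module M tM \<and> finite (carrier M) \<and>
           lam_hom N tN M tM f \<and> inj_on f (carrier N) \<and>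
           card (rcosets\<^bsub>M\<^esub> (f ` carrier N)) = l \<and>
           one_minus_t M tM = f ` carrier N"
proof -
  obtain M0 :: "('a \<times> 'a) monoid" and T0 f0 where "good N tN M0 T0 f0"
    using good_base[OF assms(1,2)] by blast
  then obtain M :: "('a \<times> 'a) monoid" and TM f where G: "good N tN M TM f"
    and eq: "one_minus_t M TM = f ` carrier N"
    using good_final[OF assms(1,2)] by blast
  have LM: "lam_module M TM" and finM: "finite (carrier M)" and LH: "lam_hom N tN M TM f"
    and injf: "inj_on f (carrier N)"
    and cardeq: "card (carrier M) * card (one_minus_t N tN) = card (carrier N) * card (one_minus_t M TM)"
    using G unfolding good_def by auto
  interpret N: comm_group N using lam_moduleD[OF assms(1)] by simp
  interpret M: comm_group M using lam_moduleD[OF LM] by simp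
  have fhom: "f \<in> hom N M" using LH unfolding lam_hom_def by auto
  interpret fh: group_hom N M f by unfold_locales (rule fhom)
  have sNpos: "0 < card (one_minus_t N tN)" by (rule omt_card_pos[OF assms(1,2)])
  have lagN: "l * card (one_minus_t N tN) = card (carrier N)"
    using N.lagrange[OF omt_subgroup[OF assms(1)]] assms(3) by (simp add: order_def)
  have cfN: "card (f ` carrier N) = card (carrier N)" using injf by (simp add: card_image)
  have "card (carrier M) * card (one_minus_t N tN) = (card (carrier N) * l) * card (one_minus_t N tN)"
    using cardeq eq cfN lagN by (simp add: algebra_simps)
  then have cM: "card (carrier M) = card (carrier N) * l" using sNpos by simp
  have Npos: "0 < card (carrier N)" using assms(2) N.one_closed by (auto simp: card_gt_0_iff)
  have "card (rcosets\<^bsub>M\<^esub> (f ` carrier N)) * card (carrier N) = card (carrier N) * l"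
    using M.lagrange[OF fh.img_is_subgroup] cfN cM by (simp add: order_def)
  then have "card (rcosets\<^bsub>M\<^esub> (f ` carrier N)) = l" using Npos by (simp add: mult.commute)
  then show ?thesis using LM finM LH injf eq by blast
qed


end
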